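(* Let $h>0$ and $\theta\in(0,\pi/2)$, and let $\Omega'\subset\mathbb{C}$ be the closed parallelogram with vertices $0,\ 1,\ 1+he^{i\theta},\ he^{i\theta}$. Let $\Gamma'_\theta$ be the family of parallel slanted segments $\{x+se^{i\theta}: 0\le s\le h\}$, $x\in[0,1]$, joining the two horizontal sides of $\Omega'$; let $\Sigma'_0$ be the family of horizontal segments of $\Omega'$ joining its two slanted sides $[0,he^{i\theta}]$ and $[1,1+he^{i\theta}]$; and let $\Sigma'$ be the family of all locally rectifiable curves in $\Omega'$ joining these two slanted sides. Then \[ M_2(\Gamma'_\theta)=\frac{\sin\theta}{h},\qquad M_2(\Gamma'_\theta)\,M_2(\Sigma'_0)=\sin^2\theta, \] and \[ |M_2(\Sigma')-M_2(\Sigma'_0)|\le h\,\frac{\cos^2\theta}{\sin\theta}. \]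
   Context: For a family $\Gamma$ of locally rectifiable curves in a domain of $\mathbb{R}^2$, a non-negative Borel function $\rho$ is admissible if $\int_\gamma\rho\,ds\ge1$ for every $\gamma\in\Gamma$ (arc-length integral), and the 2-module is $M_2(\Gamma)=\inf\int_{\mathbb{R}^2}\rho^2\,dm$ over all admissible $\rho$, where $m$ is Lebesgue measure. *)

theory Defs
  imports "HOL-Analysis.Analysis"
begin

definition curve_length_on :: "(real \<Rightarrow> complex) \<Rightarrow> real \<Rightarrow> real \<Rightarrow> ennreal" where
  "curve_length_on \<gamma> a b =
     (SUP p \<in> {(n, t). t 0 = a \<and> t n = b \<and> (\<forall>i<n. t i \<le> t (Suc i))}.
        (\<Sum>i<fst p. ennreal (norm (\<gamma> (snd p (Suc i)) - \<gamma> (snd p i)))))"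

definition rectifiable_curve :: "(real \<Rightarrow> complex) \<Rightarrow> bool" where
  "rectifiable_curve \<gamma> \<longleftrightarrow> path \<gamma> \<and> curve_length_on \<gamma> 0 1 < \<infinity>"

definition arclength_fun :: "(real \<Rightarrow> complex) \<Rightarrow> real \<Rightarrow> real" where
  "arclength_fun \<gamma> t = enn2real (curve_length_on \<gamma> 0 (min 1 (max 0 t)))"

definition arclength_integral :: "(complex \<Rightarrow> ennreal) \<Rightarrow> (real \<Rightarrow> complex) \<Rightarrow> ennreal" where
  "arclength_integral \<rho> \<gamma> =
     (\<integral>\<^sup>+ t. \<rho> (\<gamma> t) * indicator {0..1} t \<partial>interval_measure (arclength_fun \<gamma>))"

definition admissible :: "(real \<Rightarrow> complex) set \<Rightarrow> (complex \<Rightarrow> ennreal) \<Rightarrow> bool" where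
  "admissible \<Gamma> \<rho> \<longleftrightarrow> \<rho> \<in> borel_measurable borel \<and> (\<forall>\<gamma>\<in>\<Gamma>. arclength_integral \<rho> \<gamma> \<ge> 1)"

definition module2 :: "(real \<Rightarrow> complex) set \<Rightarrow> ennreal" where
  "module2 \<Gamma> = (INF \<rho> \<in> {\<rho>. admissible \<Gamma> \<rho>}. \<integral>\<^sup>+ z. (\<rho> z)\<^sup>2 \<partial>lborel)"

end

theory Submission
  imports Defs
begin

lemma interval_measure_clamp:
  fixes c :: real
  assumes c: "c \<ge> 0"
  shows "interval_measure (\<lambda>t. c * min 1 (max 0 t)) = density lborel (\<lambda>t. ennreal c * indicator {0..1} t)"
proof (rule measure_eqI_lessThan)
  define F where "F = (\<lambda>t::real. c * min 1 (max 0 t))"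
  have monoF: "F x \<le> F y" if "x \<le> y" for x y using that c unfolding F_def
    by (intro mult_left_mono) auto
  have contF: "continuous (at_right a) F" for a unfolding F_def
    by (intro continuous_intros)
  have Fle: "F x \<le> c" for x unfolding F_def using c by (simp add: mult_left_le)
  have IM: "emeasure (interval_measure F) {x<..} = ennreal (c - F x)" for x
  proof -
    have "(SUP n. emeasure (interval_measure F) {x<..x + real n}) = emeasure (interval_measure F) (\<Union>n. {x<..x + real n})"
      by (intro SUP_emeasure_incseq) (auto simp: incseq_def)
    also have "(\<Union>n. {x<..x + real n}) = {x<..}"
    proof (auto)
      fix y assume "x < y"
      obtain n :: nat where "y - x \<le> real n" using real_arch_simple by blast
      then show "\<exists>n. y \<le> x + real n" by (intro exI[of _ n]) simp
    qed
    also have "(\<lambda>n. emeasure (interval_measure F) {x<..x + real n}) = (\<lambda>n. ennreal (F (x + real n) - F x))"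
      by (intro ext emeasure_interval_measure_Ioc monoF contF) auto
    finally have eq: "emeasure (interval_measure F) {x<..} = (SUP n. ennreal (F (x + real n) - F x))" ..
    obtain n :: nat where n: "1 - x \<le> real n" using real_arch_simple by blast
    have "F (x + real n) = c" unfolding F_def using n by simp
    have "(SUP n. ennreal (F (x + real n) - F x)) = ennreal (c - F x)"
    proof (rule antisym)
      show "(SUP n. ennreal (F (x + real n) - F x)) \<le> ennreal (c - F x)"
        by (intro SUP_least ennreal_leI) (use Fle in auto)
      show "ennreal (c - F x) \<le> (SUP n. ennreal (F (x + real n) - F x))"
        using \<open>F (x + real n) = c\<close> by (intro SUP_upper2[of n]) auto
    qed
    then show ?thesis using eq by simp
  qed
  have DN: "emeasure (density lborel (\<lambda>t. ennreal c * indicator {0..1} t)) {x<..} = ennreal (c - F x)" for x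
  proof -
    have "emeasure (density lborel (\<lambda>t. ennreal c * indicator {0..1} t)) {x<..}
       = (\<integral>\<^sup>+ t. ennreal c * indicator ({0..1} \<inter> {x<..}) t \<partial>lborel)"
      by (subst emeasure_density) (auto intro!: nn_integral_cong split: split_indicator)
    also have "\<dots> = ennreal c * emeasure lborel ({0..1} \<inter> {x<..})"
      by (simp add: nn_integral_cmult)
    also have "\<dots> = ennreal (c - F x)"
    proof (cases "x < 0")
      case True
      then have "{0..1} \<inter> {x<..} = {0..1::real}" by auto
      then show ?thesis using True by (simp add: F_def)
    next
      case False
      show ?thesis
      proof (cases "x \<le> 1")
        case True
        then have "{0..1} \<inter> {x<..} = {x<..1::real}" using False by auto
        then show ?thesis using True False c by (simp add: F_def ennreal_mult[symmetric] algebra_simps)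
      next
        case False2: False
        then have "{0..1} \<inter> {x<..} = ({}::real set)" by auto
        then show ?thesis using False2 by (simp add: F_def)
      qed
    qed
    finally show ?thesis .
  qed
  show "sets (interval_measure (\<lambda>t. c * min 1 (max 0 t))) = sets borel" by simp
  show "sets (density lborel (\<lambda>t. ennreal c * indicator {0..1} t)) = sets borel" by simp
  show "emeasure (interval_measure (\<lambda>t. c * min 1 (max 0 t))) {x<..} < \<infinity>" for x
    using IM[of x] unfolding F_def by simp
  show "emeasure (interval_measure (\<lambda>t. c * min 1 (max 0 t))) {x<..} =
        emeasure (density lborel (\<lambda>t. ennreal c * indicator {0..1} t)) {x<..}" for x
    using IM[of x] DN[of x] unfolding F_def by simp
qed

lemma norm_linepath_diff: "norm (linepath p q u - linepath p q v) = \<bar>u - v\<bar> * norm (q - p)"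
proof -
  have "linepath p q u - linepath p q v = (u - v) *\<^sub>R (q - p)"
    by (simp add: linepath_def algebra_simps)
  then show ?thesis by simp
qed

lemma chain_mono:
  assumes "\<forall>i<n. t i \<le> t (Suc i)" "i \<le> j" "j \<le> n"
  shows "(t i :: real) \<le> t j"
  using assms(2,3)
proof (induction j)
  case 0 then show ?case by simp
next
  case (Suc j)
  show ?case
  proof (cases "i = Suc j")
    case False
    then have "t i \<le> t j" using Suc by simp
    also have "t j \<le> t (Suc j)" using assms(1) Suc.prems by simp
    finally show ?thesis .
  qed simp
qed

lemma linepath_psum:
  assumes "\<forall>i<n. t i \<le> t (Suc i)"
  shows "(\<Sum>i<n. ennreal (norm (linepath p q (t (Suc i)) - linepath p q (t i))))
         = ennreal (norm (q - p) * (t n - t 0))"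
  using assms
proof (induction n)
  case 0 then show ?case by simp
next
  case (Suc n)
  have mono: "t 0 \<le> t n"
    using chain_mono[of "Suc n" t 0 n] Suc.prems by simp
  have "(\<Sum>i<Suc n. ennreal (norm (linepath p q (t (Suc i)) - linepath p q (t i))))
      = ennreal (norm (q - p) * (t n - t 0)) + ennreal (norm (q - p) * (t (Suc n) - t n))"
    using Suc by (simp add: norm_linepath_diff mult.commute)
  also have "\<dots> = ennreal (norm (q - p) * (t (Suc n) - t 0))"
    using Suc.prems mono by (subst ennreal_plus[symmetric]) (auto simp: algebra_simps intro: mult_right_mono)
  finally show ?case .
qed

lemma curve_length_linepath:
  assumes "a \<le> b"
  shows "curve_length_on (linepath p q) a b = ennreal (norm (q - p) * (b - a))"
proof -
  let ?P = "{(n, t). t 0 = a \<and> t n = b \<and> (\<forall>i<n. t i \<le> t (Suc i))}"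
  have "(1::nat, \<lambda>i::nat. if i = 0 then a else b) \<in> ?P" using assms by auto
  then have ne: "?P \<noteq> {}" by blast
  have "curve_length_on (linepath p q) a b = (SUP x\<in>?P. ennreal (norm (q - p) * (b - a)))"
    unfolding curve_length_on_def
    by (intro SUP_cong refl) (auto simp: linepath_psum simp del: sum_ennreal)
  also have "\<dots> = ennreal (norm (q - p) * (b - a))" using ne by simp
  finally show ?thesis .
qed

lemma arclength_fun_linepath:
  "arclength_fun (linepath p q) = (\<lambda>t. norm (q - p) * min 1 (max 0 t))"
  by (rule ext) (simp add: arclength_fun_def curve_length_linepath)

lemma arclength_integral_linepath:
  assumes [measurable]: "\<rho> \<in> borel_measurable borel"
  shows "arclength_integral \<rho> (linepath p q) =
         ennreal (norm (q - p)) * (\<integral>\<^sup>+ t. \<rho> (linepath p q t) * indicator {0..1} t \<partial>lborel)"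
proof -
  have [measurable]: "linepath p q \<in> borel_measurable borel"
    by (intro borel_measurable_continuous_onI) (simp add: linepath_def continuous_intros)
  have "arclength_integral \<rho> (linepath p q) =
    (\<integral>\<^sup>+ t. \<rho> (linepath p q t) * indicator {0..1} t \<partial>density lborel (\<lambda>t. ennreal (norm (q - p)) * indicator {0..1} t))"
    unfolding arclength_integral_def arclength_fun_linepath
    by (subst interval_measure_clamp) auto
  also have "\<dots> = (\<integral>\<^sup>+ t. ennreal (norm (q - p)) * (\<rho> (linepath p q t) * indicator {0..1} t) \<partial>lborel)"
    by (subst nn_integral_density) (auto intro!: nn_integral_cong split: split_indicator)
  also have "\<dots> = ennreal (norm (q - p)) * (\<integral>\<^sup>+ t. \<rho> (linepath p q t) * indicator {0..1} t \<partial>lborel)"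
    by (simp add: nn_integral_cmult)
  finally show ?thesis .
qed

definition parts :: "real \<Rightarrow> real \<Rightarrow> (nat \<times> (nat \<Rightarrow> real)) set" where
  "parts a b = {(n, t). t 0 = a \<and> t n = b \<and> (\<forall>i<n. t i \<le> t (Suc i))}"

definition psum :: "(real \<Rightarrow> complex) \<Rightarrow> nat \<Rightarrow> (nat \<Rightarrow> real) \<Rightarrow> ennreal" where
  "psum \<gamma> n t = (\<Sum>i<n. ennreal (norm (\<gamma> (t (Suc i)) - \<gamma> (t i))))"

lemma L_def': "curve_length_on \<gamma> a b = (SUP p\<in>parts a b. psum \<gamma> (fst p) (snd p))"
  unfolding curve_length_on_def parts_def psum_def by simp

lemma psum_le_L: "(n, t) \<in> parts a b \<Longrightarrow> psum \<gamma> n t \<le> curve_length_on \<gamma> a b"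
  unfolding L_def' by (rule SUP_upper2[of "(n,t)"]) auto

lemma L_leI: "(\<And>n t. (n, t) \<in> parts a b \<Longrightarrow> psum \<gamma> n t \<le> X) \<Longrightarrow> curve_length_on \<gamma> a b \<le> X"
  unfolding L_def' by (rule SUP_least) auto

lemma psum_add: "psum \<gamma> (j + k) t = psum \<gamma> j t + psum \<gamma> k (\<lambda>i. t (j + i))"
proof (induction k)
  case 0 then show ?case by (simp add: psum_def)
next
  case (Suc k)
  then show ?case by (simp add: psum_def add.assoc)
qed

lemma parts_range: "(n, t) \<in> parts a b \<Longrightarrow> i \<le> n \<Longrightarrow> a \<le> t i \<and> t i \<le> b"
  unfolding parts_def using chain_mono[of n t 0 i] chain_mono[of n t i n] by auto

lemma parts_le: "(n, t) \<in> parts a b \<Longrightarrow> a \<le> b"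
  using parts_range[of n t a b 0] by auto

lemma parts_split1: "(n, t) \<in> parts a b \<Longrightarrow> j \<le> n \<Longrightarrow> (j, t) \<in> parts a (t j)"
  unfolding parts_def by auto

lemma parts_split2: "(n, t) \<in> parts a b \<Longrightarrow> j \<le> n \<Longrightarrow> (n - j, \<lambda>i. t (j + i)) \<in> parts (t j) b"
  unfolding parts_def by auto

lemma L_refl: "curve_length_on \<gamma> a a = 0"
proof -
  have "psum \<gamma> n t \<le> 0" if "(n, t) \<in> parts a a" for n t
  proof -
    have "t i = a" if "i \<le> n" for i using parts_range[OF \<open>(n,t) \<in> parts a a\<close> that] by simp
    then show ?thesis unfolding psum_def by simp
  qed
  then have "curve_length_on \<gamma> a a \<le> 0" by (rule L_leI)
  then show ?thesis by simp
qed

lemma L_dist: "a \<le> b \<Longrightarrow> ennreal (norm (\<gamma> b - \<gamma> a)) \<le> curve_length_on \<gamma> a b"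
  using psum_le_L[of 1 "\<lambda>i. if i = 0 then a else b" a b \<gamma>] by (simp add: parts_def psum_def)

lemma parts_nonempty: "a \<le> b \<Longrightarrow> parts a b \<noteq> {}"
proof -
  assume "a \<le> b"
  then have "(1, \<lambda>i::nat. if i = 0 then a else b) \<in> parts a b" by (auto simp: parts_def)
  then show ?thesis by blast
qed

lemma L_superadd:
  assumes "a \<le> s" "s \<le> b"
  shows "curve_length_on \<gamma> a s + curve_length_on \<gamma> s b \<le> curve_length_on \<gamma> a b"
proof -
  have key: "psum \<gamma> n t + psum \<gamma> m u \<le> curve_length_on \<gamma> a b"
    if nt: "(n, t) \<in> parts a s" and mu: "(m, u) \<in> parts s b" for n t m u
  proof -
    define c where "c i = (if i \<le> n then t i else u (i - n))" for i
    have "(n + m, c) \<in> parts a b"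
      using nt mu unfolding parts_def c_def
      by (auto simp: not_le Suc_diff_le less_Suc_eq_le)
    then have "psum \<gamma> (n + m) c \<le> curve_length_on \<gamma> a b" by (rule psum_le_L)
    moreover have "psum \<gamma> n c = psum \<gamma> n t" unfolding psum_def c_def by (intro sum.cong) auto
    moreover have "(\<lambda>i. c (n + i)) = u" using nt mu unfolding c_def parts_def by (auto simp: fun_eq_iff)
    ultimately show ?thesis by (simp add: psum_add)
  qed
  have ne1: "parts a s \<noteq> {}" and ne2: "parts s b \<noteq> {}" using assms parts_nonempty by auto
  have "curve_length_on \<gamma> a s + curve_length_on \<gamma> s b
       = (SUP p\<in>parts a s. SUP q\<in>parts s b. psum \<gamma> (fst p) (snd p) + psum \<gamma> (fst q) (snd q))"
    unfolding L_def' using ne1 ne2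
    by (simp add: ennreal_SUP_add_left[symmetric] ennreal_SUP_add_right) (rule SUP_commute)
  also have "\<dots> \<le> curve_length_on \<gamma> a b"
    by (intro SUP_least) (auto intro: key)
  finally show ?thesis .
qed

lemma L_mono: "a \<le> s \<Longrightarrow> s \<le> b \<Longrightarrow> curve_length_on \<gamma> a s \<le> curve_length_on \<gamma> a b"
  using L_superadd[of a s b \<gamma>] by (metis add.right_neutral add_left_mono order_trans zero_le)

lemma psum_Suc: "psum \<gamma> (Suc n) t = psum \<gamma> n t + ennreal (norm (\<gamma> (t (Suc n)) - \<gamma> (t n)))"
  by (simp add: psum_def)

lemma psum_cong: "(\<And>i. i \<le> n \<Longrightarrow> t i = u i) \<Longrightarrow> psum \<gamma> n t = psum \<gamma> n u"
  unfolding psum_def by (intro sum.cong) auto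

lemma L_subadd:
  assumes as: "a \<le> s" and sb: "s \<le> b"
  shows "curve_length_on \<gamma> a b \<le> curve_length_on \<gamma> a s + curve_length_on \<gamma> s b"
proof (rule L_leI)
  fix n t assume nt: "(n, t) \<in> parts a b"
  have tn: "t n = b" and t0: "t 0 = a" and mono: "\<forall>i<n. t i \<le> t (Suc i)" using nt by (auto simp: parts_def)
  define j where "j = (LEAST j. s \<le> t j)"
  have sj: "s \<le> t j" unfolding j_def by (rule LeastI[of _ n]) (use tn sb in simp)
  have jn: "j \<le> n" unfolding j_def by (rule Least_le) (use tn sb in simp)
  show "psum \<gamma> n t \<le> curve_length_on \<gamma> a s + curve_length_on \<gamma> s b"
  proof (cases j)
    case 0
    then have "s = a" using sj t0 as by simp
    then have "psum \<gamma> n t \<le> curve_length_on \<gamma> s b" using psum_le_L[OF nt] by simp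
    then show ?thesis by (simp add: add_increasing)
  next
    case (Suc k)
    have tk: "t k < s" using not_less_Least[of k "\<lambda>j. s \<le> t j"] Suc unfolding j_def by auto
    have kn: "k < n" using jn Suc by simp
    have split1: "psum \<gamma> n t = psum \<gamma> k t + psum \<gamma> (n - k) (\<lambda>i. t (k + i))"
      using psum_add[of \<gamma> k "n - k" t] kn by simp
    have split2: "psum \<gamma> (n - k) (\<lambda>i. t (k + i)) = ennreal (norm (\<gamma> (t j) - \<gamma> (t k))) + psum \<gamma> (n - j) (\<lambda>i. t (j + i))"
    proof -
      have e: "n - k = 1 + (n - j)" using kn Suc jn by simp
      have p1: "psum \<gamma> 1 (\<lambda>i. t (k + i)) = ennreal (norm (\<gamma> (t j) - \<gamma> (t k)))"
        using Suc by (simp add: psum_def)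
      have "(\<lambda>i. t (k + (1 + i))) = (\<lambda>i. t (j + i))" using Suc by simp
      then show ?thesis unfolding e psum_add p1 by simp
    qed
    have tri: "ennreal (norm (\<gamma> (t j) - \<gamma> (t k))) \<le> ennreal (norm (\<gamma> s - \<gamma> (t k))) + ennreal (norm (\<gamma> (t j) - \<gamma> s))"
    proof -
      have "norm (\<gamma> (t j) - \<gamma> (t k)) \<le> norm (\<gamma> s - \<gamma> (t k)) + norm (\<gamma> (t j) - \<gamma> s)"
        using norm_triangle_ineq[of "\<gamma> s - \<gamma> (t k)" "\<gamma> (t j) - \<gamma> s"] by simp
      then show ?thesis by (simp add: ennreal_plus[symmetric] del: ennreal_plus)
    qed
    define t' where "t' = t(Suc k := s)"
    have A: "psum \<gamma> k t + ennreal (norm (\<gamma> s - \<gamma> (t k))) \<le> curve_length_on \<gamma> a s"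
    proof -
      have "(Suc k, t') \<in> parts a s"
        using mono t0 tk kn unfolding parts_def t'_def by auto
      then have "psum \<gamma> (Suc k) t' \<le> curve_length_on \<gamma> a s" by (rule psum_le_L)
      moreover have "psum \<gamma> (Suc k) t' = psum \<gamma> k t + ennreal (norm (\<gamma> s - \<gamma> (t k)))"
        unfolding psum_Suc by (subst psum_cong[of k t' t]) (auto simp: t'_def)
      ultimately show ?thesis by simp
    qed
    define u where "u i = (if i = 0 then s else t (k + i))" for i
    have B: "ennreal (norm (\<gamma> (t j) - \<gamma> s)) + psum \<gamma> (n - j) (\<lambda>i. t (j + i)) \<le> curve_length_on \<gamma> s b"
    proof -
      have "(Suc (n - j), u) \<in> parts s b"
        unfolding parts_def u_def using mono tn sj Suc jn by (auto simp: less_Suc_eq_0_disj)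
      then have "psum \<gamma> (1 + (n - j)) u \<le> curve_length_on \<gamma> s b" by (simp add: psum_le_L)
      moreover have "psum \<gamma> (1 + (n - j)) u = ennreal (norm (\<gamma> (t j) - \<gamma> s)) + psum \<gamma> (n - j) (\<lambda>i. t (j + i))"
        unfolding psum_add using Suc by (simp add: psum_def u_def)
      ultimately show ?thesis by simp
    qed
    have "psum \<gamma> n t = psum \<gamma> k t + ennreal (norm (\<gamma> (t j) - \<gamma> (t k))) + psum \<gamma> (n - j) (\<lambda>i. t (j + i))"
      using split1 split2 by (simp add: add.assoc)
    also have "\<dots> \<le> psum \<gamma> k t + (ennreal (norm (\<gamma> s - \<gamma> (t k))) + ennreal (norm (\<gamma> (t j) - \<gamma> s))) + psum \<gamma> (n - j) (\<lambda>i. t (j + i))"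
      using tri by (intro add_mono order_refl)
    also have "\<dots> = (psum \<gamma> k t + ennreal (norm (\<gamma> s - \<gamma> (t k)))) + (ennreal (norm (\<gamma> (t j) - \<gamma> s)) + psum \<gamma> (n - j) (\<lambda>i. t (j + i)))"
      by (simp add: add.assoc)
    also have "\<dots> \<le> curve_length_on \<gamma> a s + curve_length_on \<gamma> s b"
      using A B by (rule add_mono)
    finally show ?thesis .
  qed
qed

lemma L_add: "a \<le> s \<Longrightarrow> s \<le> b \<Longrightarrow> curve_length_on \<gamma> a b = curve_length_on \<gamma> a s + curve_length_on \<gamma> s b"
  using L_subadd L_superadd by (metis antisym)

lemma L_fin:
  assumes fin: "curve_length_on \<gamma> 0 1 < \<infinity>" and "0 \<le> u" "u \<le> v" "v \<le> 1"
  shows "curve_length_on \<gamma> u v < \<infinity>"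
proof -
  have "curve_length_on \<gamma> u v \<le> curve_length_on \<gamma> u 1" using assms by (intro L_mono) auto
  also have "\<dots> \<le> curve_length_on \<gamma> 0 u + curve_length_on \<gamma> u 1" by simp
  also have "\<dots> = curve_length_on \<gamma> 0 1" using assms by (intro L_add[symmetric]) auto
  finally show ?thesis using fin by (simp add: le_less_trans)
qed

lemma L_small:
  assumes cont: "continuous_on {0..1} \<gamma>" and fin: "curve_length_on \<gamma> 0 1 < \<infinity>"
    and x: "0 \<le> x" "x < 1" and e: "\<epsilon> > 0"
  shows "\<exists>t1>x. t1 \<le> 1 \<and> curve_length_on \<gamma> x t1 < ennreal \<epsilon>"
proof (rule ccontr)
  assume "\<not> ?thesis"
  then have H: "\<And>t1. x < t1 \<Longrightarrow> t1 \<le> 1 \<Longrightarrow> ennreal \<epsilon> \<le> curve_length_on \<gamma> x t1" by (auto simp: not_less)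
  obtain \<delta> where d: "\<delta> > 0" and dH: "\<And>u. u \<in> {0..1} \<Longrightarrow> dist u x < \<delta> \<Longrightarrow> dist (\<gamma> u) (\<gamma> x) < \<epsilon> / 3"
    using cont x e unfolding continuous_on_iff by (metis atLeastAtMost_iff divide_pos_pos less_eq_real_def zero_less_numeral)
  define t1 where "t1 = min 1 (x + \<delta> / 2)"
  have t1: "x < t1" "t1 \<le> 1" using x d by (auto simp: t1_def)
  have finx: "curve_length_on \<gamma> x t1 < \<infinity>" using L_fin[OF fin, of x t1] x t1 by simp
  define ell where "ell = enn2real (curve_length_on \<gamma> x t1)"
  have Lx: "curve_length_on \<gamma> x t1 = ennreal ell" using finx by (simp add: ell_def)
  have "ennreal \<epsilon> \<le> ennreal ell" using H[OF t1] Lx by simp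
  then have le: "\<epsilon> \<le> ell" using e by (simp add: ennreal_le_iff2)
  have "ennreal (ell - \<epsilon> / 3) < curve_length_on \<gamma> x t1"
    unfolding Lx using e le by (subst ennreal_less_iff) auto
  then obtain n t where nt: "(n, t) \<in> parts x t1" and less: "ennreal (ell - \<epsilon> / 3) < psum \<gamma> n t"
    unfolding L_def' less_SUP_iff by auto
  have tn: "t n = t1" and t0: "t 0 = x" using nt by (auto simp: parts_def)
  define j where "j = (LEAST j. x < t j)"
  have xj: "x < t j" unfolding j_def by (rule LeastI[of _ n]) (use tn t1 in simp)
  have jn: "j \<le> n" unfolding j_def by (rule Least_le) (use tn t1 in simp)
  have j0: "j \<noteq> 0" using xj t0 by (metis less_irrefl)
  then obtain k where jk: "j = Suc k" by (cases j) auto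
  have tix: "t i = x" if "i \<le> k" for i
  proof -
    have "\<not> x < t i" using not_less_Least[of i "\<lambda>j. x < t j"] that jk unfolding j_def by auto
    moreover have "x \<le> t i" using parts_range[OF nt, of i] that jk jn by simp
    ultimately show ?thesis by simp
  qed
  have tj1: "t j \<le> t1" using parts_range[OF nt jn] by simp
  have pj: "psum \<gamma> j t = ennreal (norm (\<gamma> (t j) - \<gamma> x))"
  proof -
    have "psum \<gamma> k t = psum \<gamma> k (\<lambda>_. x)" by (rule psum_cong) (simp add: tix)
    also have "\<dots> = 0" by (simp add: psum_def)
    finally show ?thesis unfolding jk psum_Suc using tix[of k] by (simp add: jk)
  qed
  have small: "norm (\<gamma> (t j) - \<gamma> x) < \<epsilon> / 3"
  proof -
    have "t j \<in> {0..1}" using xj x tj1 t1 by auto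
    moreover have "dist (t j) x < \<delta>" using xj tj1 d unfolding t1_def dist_real_def by auto
    ultimately show ?thesis using dH by (simp add: dist_norm)
  qed
  have tail: "psum \<gamma> (n - j) (\<lambda>i. t (j + i)) \<le> curve_length_on \<gamma> (t j) t1"
    using psum_le_L[OF parts_split2[OF nt jn]] tn by simp
  have finm: "curve_length_on \<gamma> (t j) t1 < \<infinity>" using L_fin[OF fin, of "t j" t1] xj x tj1 t1 by simp
  define m where "m = enn2real (curve_length_on \<gamma> (t j) t1)"
  have Lm: "curve_length_on \<gamma> (t j) t1 = ennreal m" and m0: "m \<ge> 0" using finm by (auto simp: m_def)
  have "curve_length_on \<gamma> x t1 = curve_length_on \<gamma> x (t j) + curve_length_on \<gamma> (t j) t1"
    using xj tj1 by (intro L_add) auto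
  moreover have "ennreal \<epsilon> \<le> curve_length_on \<gamma> x (t j)" using H xj tj1 t1 by auto
  ultimately have "ennreal \<epsilon> + ennreal m \<le> ennreal ell" using Lx Lm by (metis add_right_mono)
  then have "ennreal (\<epsilon> + m) \<le> ennreal ell" using e m0 by (simp add: ennreal_plus[symmetric] del: ennreal_plus)
  then have A: "\<epsilon> + m \<le> ell" using e m0 le by (subst (asm) ennreal_le_iff) auto
  have "psum \<gamma> n t = psum \<gamma> j t + psum \<gamma> (n - j) (\<lambda>i. t (j + i))"
    using psum_add[of \<gamma> j "n - j" t] jn by simp
  also have "\<dots> \<le> ennreal (norm (\<gamma> (t j) - \<gamma> x)) + ennreal m"
    unfolding pj using tail Lm by (intro add_mono) auto
  finally have "ennreal (ell - \<epsilon> / 3) < ennreal (norm (\<gamma> (t j) - \<gamma> x) + m)"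
    using less m0 by (simp add: ennreal_plus[symmetric] del: ennreal_plus)
  then have "ell - \<epsilon> / 3 < norm (\<gamma> (t j) - \<gamma> x) + m"
    using m0 le e by (subst (asm) ennreal_less_iff) auto
  then show False using A small e by linarith
qed

lemma arclength_fun_mono:
  assumes fin: "curve_length_on \<gamma> 0 1 < \<infinity>" and "x \<le> y"
  shows "arclength_fun \<gamma> x \<le> arclength_fun \<gamma> y"
  unfolding arclength_fun_def
  by (intro enn2real_mono L_mono) (use assms L_fin[OF fin, of 0 "min 1 (max 0 y)"] in auto)

lemma arclength_fun_diff:
  assumes fin: "curve_length_on \<gamma> 0 1 < \<infinity>" and "0 \<le> u" "u \<le> v" "v \<le> 1"
  shows "arclength_fun \<gamma> v - arclength_fun \<gamma> u = enn2real (curve_length_on \<gamma> u v)"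
proof -
  have "curve_length_on \<gamma> 0 v = curve_length_on \<gamma> 0 u + curve_length_on \<gamma> u v"
    using assms by (intro L_add) auto
  then have "enn2real (curve_length_on \<gamma> 0 v) = enn2real (curve_length_on \<gamma> 0 u) + enn2real (curve_length_on \<gamma> u v)"
    using L_fin[OF fin, of 0 u] L_fin[OF fin, of u v] assms by (simp add: enn2real_plus)
  then show ?thesis using assms by (simp add: arclength_fun_def)
qed

lemma arclength_fun_right_cont:
  assumes cont: "continuous_on {0..1} \<gamma>" and fin: "curve_length_on \<gamma> 0 1 < \<infinity>"
  shows "continuous (at_right a) (arclength_fun \<gamma>)"
  unfolding continuous_within
proof -
  consider "a < 0" | "1 \<le> a" | "0 \<le> a" "a < 1" by linarith
  then show "(arclength_fun \<gamma> \<longlongrightarrow> arclength_fun \<gamma> a) (at_right a)"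
  proof cases
    case 1
    have "\<forall>\<^sub>F t in at_right a. arclength_fun \<gamma> t = arclength_fun \<gamma> a"
      using 1 by (subst eventually_at_right[of a 0]) (auto simp: arclength_fun_def intro!: exI[of _ 0])
    then show ?thesis by (rule tendsto_eventually)
  next
    case 2
    have "\<forall>\<^sub>F t in at_right a. arclength_fun \<gamma> t = arclength_fun \<gamma> a"
      using 2 by (subst eventually_at_right[of a "a+1"]) (auto simp: arclength_fun_def intro!: exI[of _ "a+1"])
    then show ?thesis by (rule tendsto_eventually)
  next
    case 3
    show ?thesis
    proof (rule tendstoI)
      fix e :: real assume e: "e > 0"
      obtain t1 where t1: "a < t1" "t1 \<le> 1" and Lt1: "curve_length_on \<gamma> a t1 < ennreal e"
        using L_small[OF cont fin 3 e] by auto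
      have "\<forall>\<^sub>F t in at_right a. t < t1" using t1 by (subst eventually_at_right[of a t1]) auto
      moreover have "\<forall>\<^sub>F t in at_right a. a < t" by (rule eventually_at_right_less)
      ultimately show "\<forall>\<^sub>F t in at_right a. dist (arclength_fun \<gamma> t) (arclength_fun \<gamma> a) < e"
      proof eventually_elim
        case (elim t)
        have d: "arclength_fun \<gamma> t - arclength_fun \<gamma> a = enn2real (curve_length_on \<gamma> a t)"
          using elim 3 t1 by (intro arclength_fun_diff[OF fin]) auto
        have "curve_length_on \<gamma> a t \<le> curve_length_on \<gamma> a t1" using elim by (intro L_mono) auto
        then have "curve_length_on \<gamma> a t < ennreal e" using Lt1 by simp
        moreover have "curve_length_on \<gamma> a t < \<infinity>" using L_fin[OF fin, of a t] elim 3 t1 by simp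
        ultimately have "enn2real (curve_length_on \<gamma> a t) < e" by (simp add: enn2real_less_iff)
        then show ?case using d by (simp add: dist_real_def)
      qed
    qed
  qed
qed

lemma Complex_pair_measurable: "(\<lambda>p::real\<times>real. Complex (fst p) (snd p)) \<in> borel_measurable (lborel \<Otimes>\<^sub>M lborel)"
proof -
  have e: "(\<lambda>p::real\<times>real. Complex (fst p) (snd p)) = (\<lambda>p. of_real (fst p) + \<i> * of_real (snd p))"
    by (auto simp: complex_eq_iff)
  show ?thesis unfolding e by measurable
qed

lemma lborel_complex_eq:
  "lborel = distr (lborel \<Otimes>\<^sub>M lborel) borel (\<lambda>p. Complex (fst p) (snd p))"
proof (rule lborel_eqI)
  fix l u :: complex
  assume le: "\<And>b. b \<in> Basis \<Longrightarrow> l \<bullet> b \<le> u \<bullet> b"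
  have le1: "Re l \<le> Re u" using le[of 1] by (simp add: inner_complex_def)
  have le2: "Im l \<le> Im u" using le[of \<i>] by (simp add: inner_complex_def)
  have [measurable]: "(\<lambda>p. Complex (fst p) (snd p)) \<in> borel_measurable (lborel \<Otimes>\<^sub>M lborel)"
    by (rule Complex_pair_measurable)
  have pre: "(\<lambda>p. Complex (fst p) (snd p)) -` box l u \<inter> space (lborel \<Otimes>\<^sub>M lborel)
      = {Re l<..<Re u} \<times> {Im l<..<Im u}"
    by (auto simp: box_def Basis_complex_def inner_complex_def space_pair_measure)
  have "emeasure (distr (lborel \<Otimes>\<^sub>M lborel) borel (\<lambda>p. Complex (fst p) (snd p))) (box l u)
     = emeasure (lborel \<Otimes>\<^sub>M lborel) ({Re l<..<Re u} \<times> {Im l<..<Im u})"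
    by (subst emeasure_distr) (auto simp: pre)
  also have "\<dots> = ennreal (Re u - Re l) * ennreal (Im u - Im l)"
    by (subst lborel.emeasure_pair_measure_Times) (use le1 le2 in auto)
  also have "\<dots> = ennreal (\<Prod>b\<in>Basis. (u - l) \<bullet> b)"
    using le1 le2 by (simp add: Basis_complex_def inner_complex_def ennreal_mult)
  finally show "emeasure (distr (lborel \<Otimes>\<^sub>M lborel) borel (\<lambda>p. Complex (fst p) (snd p))) (box l u)
     = ennreal (\<Prod>b\<in>Basis. (u - l) \<bullet> b)" .
qed simp

lemma nn_integral_complex_iterated:
  fixes g :: "complex \<Rightarrow> ennreal"
  assumes g[measurable]: "g \<in> borel_measurable borel"
  shows "(\<integral>\<^sup>+ z. g z \<partial>lborel) = (\<integral>\<^sup>+ y. \<integral>\<^sup>+ x. g (Complex x y) \<partial>lborel \<partial>lborel)"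
proof -
  have [measurable]: "(\<lambda>p. Complex (fst p) (snd p)) \<in> borel_measurable (lborel \<Otimes>\<^sub>M lborel)"
    by (rule Complex_pair_measurable)
  have "(\<integral>\<^sup>+ z. g z \<partial>lborel) = (\<integral>\<^sup>+ p. g (Complex (fst p) (snd p)) \<partial>(lborel \<Otimes>\<^sub>M lborel))"
    by (subst lborel_complex_eq) (simp add: nn_integral_distr)
  also have "\<dots> = (\<integral>\<^sup>+ y. \<integral>\<^sup>+ x. g (Complex x y) \<partial>lborel \<partial>lborel)"
    by (subst lborel_pair.nn_integral_snd[symmetric]) (auto)
  finally show ?thesis .
qed

lemma shear_integral:
  fixes w :: complex and g :: "complex \<Rightarrow> ennreal"
  assumes g[measurable]: "g \<in> borel_measurable borel" and w: "Im w > 0"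
  shows "(\<integral>\<^sup>+ z. g z \<partial>lborel) = ennreal (Im w) * (\<integral>\<^sup>+ t. \<integral>\<^sup>+ x. g (of_real x + of_real t * w) \<partial>lborel \<partial>lborel)"
proof -
  define H where "H y = (\<integral>\<^sup>+ x. g (Complex x y) \<partial>lborel)" for y
  have gC[measurable]: "(\<lambda>(y, x). g (Complex x y)) \<in> borel_measurable (lborel \<Otimes>\<^sub>M lborel)"
  proof -
    have "(\<lambda>p::real\<times>real. Complex (snd p) (fst p)) \<in> borel_measurable (lborel \<Otimes>\<^sub>M lborel)"
    proof -
      have e: "(\<lambda>p::real\<times>real. Complex (snd p) (fst p)) = (\<lambda>p. of_real (snd p) + \<i> * of_real (fst p))"
        by (auto simp: complex_eq_iff)
      show ?thesis unfolding e by measurable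
    qed
    then show ?thesis by (simp add: case_prod_beta')
  qed
  have [measurable]: "H \<in> borel_measurable borel"
    unfolding H_def using lborel.borel_measurable_nn_integral[OF gC] by simp
  have inner: "(\<integral>\<^sup>+ x. g (of_real x + of_real t * w) \<partial>lborel) = H (Im w * t)" for t
  proof -
    have mg: "(\<lambda>x. g (Complex x (Im w * t))) \<in> borel_measurable borel" by measurable
    have "H (Im w * t) = ennreal \<bar>1\<bar> * (\<integral>\<^sup>+ x. g (Complex (t * Re w + 1 * x) (Im w * t)) \<partial>lborel)"
      unfolding H_def by (rule nn_integral_real_affine[OF mg]) simp
    also have "\<dots> = (\<integral>\<^sup>+ x. g (of_real x + of_real t * w) \<partial>lborel)"
      by (simp, intro nn_integral_cong arg_cong[where f=g]) (auto simp: complex_eq_iff algebra_simps)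
    finally show ?thesis ..
  qed
  have "(\<integral>\<^sup>+ z. g z \<partial>lborel) = (\<integral>\<^sup>+ y. H y \<partial>lborel)"
    unfolding H_def by (rule nn_integral_complex_iterated[OF g])
  also have "\<dots> = ennreal \<bar>Im w\<bar> * (\<integral>\<^sup>+ t. H (0 + Im w * t) \<partial>lborel)"
    by (rule nn_integral_real_affine) (use w in auto)
  also have "\<dots> = ennreal (Im w) * (\<integral>\<^sup>+ t. \<integral>\<^sup>+ x. g (of_real x + of_real t * w) \<partial>lborel \<partial>lborel)"
    using w by (simp add: inner)
  finally show ?thesis .
qed

lemma arclength_integral_ge:
  assumes rc: "rectifiable_curve \<gamma>" and k: "\<And>t. t \<in> {0..1} \<Longrightarrow> ennreal k \<le> \<rho> (\<gamma> t)"
  shows "ennreal k * ennreal (norm (\<gamma> 1 - \<gamma> 0)) \<le> arclength_integral \<rho> \<gamma>"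
proof -
  have cont: "continuous_on {0..1} \<gamma>" and fin: "curve_length_on \<gamma> 0 1 < \<infinity>"
    using rc by (auto simp: rectifiable_curve_def path_def)
  define \<mu> where "\<mu> = interval_measure (arclength_fun \<gamma>)"
  have "emeasure \<mu> {0<..1} = ennreal (arclength_fun \<gamma> 1 - arclength_fun \<gamma> 0)"
    unfolding \<mu>_def
    by (rule emeasure_interval_measure_Ioc)
       (auto intro: arclength_fun_mono[OF fin] arclength_fun_right_cont[OF cont fin])
  also have "arclength_fun \<gamma> 1 - arclength_fun \<gamma> 0 = enn2real (curve_length_on \<gamma> 0 1)"
    by (rule arclength_fun_diff[OF fin]) auto
  also have "ennreal (enn2real (curve_length_on \<gamma> 0 1)) = curve_length_on \<gamma> 0 1"
    using fin by simp
  finally have m: "emeasure \<mu> {0<..1} = curve_length_on \<gamma> 0 1" .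
  have "ennreal k * ennreal (norm (\<gamma> 1 - \<gamma> 0)) \<le> ennreal k * emeasure \<mu> {0<..1}"
    unfolding m by (intro mult_left_mono L_dist) auto
  also have "\<dots> = (\<integral>\<^sup>+ t. ennreal k * indicator {0<..1} t \<partial>\<mu>)"
    by (subst nn_integral_cmult_indicator) (auto simp: \<mu>_def)
  also have "\<dots> \<le> (\<integral>\<^sup>+ t. \<rho> (\<gamma> t) * indicator {0..1} t \<partial>\<mu>)"
    by (intro nn_integral_mono) (auto simp: k split: split_indicator)
  finally show ?thesis unfolding arclength_integral_def \<mu>_def .
qed

lemma ennreal_sq_bound:
  fixes y :: ennreal and a :: real
  assumes "a \<ge> 0"
  shows "ennreal (2 * a) * y \<le> y\<^sup>2 + ennreal (a\<^sup>2)"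
proof (cases y)
  case (real r)
  have "2 * a * r \<le> r\<^sup>2 + a\<^sup>2" using sum_squares_bound[of a r] by (simp add: power2_eq_square algebra_simps)
  then show ?thesis using real assms
    by (simp add: ennreal_mult[symmetric] ennreal_plus[symmetric] ennreal_power del: ennreal_plus)
next
  case top
  then show ?thesis using assms by (cases "a = 0") (auto simp: ennreal_mult_top)
qed

lemma cs1:
  fixes f :: "real \<Rightarrow> ennreal"
  assumes f[measurable]: "f \<in> borel_measurable borel" and c: "c > 0"
    and h: "1 \<le> ennreal c * (\<integral>\<^sup>+ t. f t * indicator {0..1} t \<partial>lborel)"
  shows "ennreal (1 / c\<^sup>2) \<le> (\<integral>\<^sup>+ t. (f t)\<^sup>2 * indicator {0..1} t \<partial>lborel)"
proof -
  define a where "a = 1 / c"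
  have a0: "a > 0" using c by (simp add: a_def)
  define I where "I = (\<integral>\<^sup>+ t. f t * indicator {0..1} t \<partial>lborel)"
  define X where "X = (\<integral>\<^sup>+ t. (f t)\<^sup>2 * indicator {0..1} t \<partial>lborel)"
  have aI: "ennreal a \<le> I"
  proof -
    have "ennreal a = ennreal a * 1" by simp
    also have "\<dots> \<le> ennreal a * (ennreal c * I)" using h unfolding I_def by (intro mult_left_mono) auto
    also have "\<dots> = ennreal (a * c) * I" using a0 c by (simp add: ennreal_mult mult.assoc)
    also have "a * c = 1" using c by (simp add: a_def)
    finally show ?thesis by simp
  qed
  have "ennreal (2 * a) * I = (\<integral>\<^sup>+ t. ennreal (2 * a) * (f t * indicator {0..1} t) \<partial>lborel)"
    unfolding I_def by (simp add: nn_integral_cmult)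
  also have "\<dots> \<le> (\<integral>\<^sup>+ t. (f t)\<^sup>2 * indicator {0..1} t + ennreal (a\<^sup>2) * indicator {0..1} t \<partial>lborel)"
    by (intro nn_integral_mono) (auto simp: ennreal_sq_bound a0 less_imp_le split: split_indicator)
  also have "\<dots> = X + ennreal (a\<^sup>2)"
    unfolding X_def by (subst nn_integral_add) (auto simp: nn_integral_cmult_indicator)
  finally have "ennreal (2 * a) * I \<le> X + ennreal (a\<^sup>2)" .
  moreover have "ennreal (2 * a) * ennreal a \<le> ennreal (2 * a) * I" using aI by (intro mult_left_mono) auto
  ultimately have "ennreal (2 * a\<^sup>2) \<le> X + ennreal (a\<^sup>2)"
    using a0 by (simp add: ennreal_mult[symmetric] power2_eq_square mult.assoc)
  then have "ennreal (a\<^sup>2) \<le> X"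
  proof (cases X)
    case (real x)
    then have "ennreal (2 * a\<^sup>2) \<le> ennreal (x + a\<^sup>2)" using \<open>ennreal (2 * a\<^sup>2) \<le> X + ennreal (a\<^sup>2)\<close>
      by (simp add: ennreal_plus[symmetric] del: ennreal_plus)
    then have "2 * a\<^sup>2 \<le> x + a\<^sup>2" using real by (subst (asm) ennreal_le_iff) auto
    then show ?thesis using real by (auto intro: ennreal_leI)
  qed simp
  then show ?thesis unfolding X_def a_def by (simp add: power_divide)
qed

lemma integrate_lower:
  fixes F :: "real \<Rightarrow> real \<Rightarrow> ennreal"
  assumes F[measurable]: "\<And>s. F s \<in> borel_measurable borel" and c: "c > 0" and ab: "a \<le> b"
    and h: "\<And>s. s \<in> {a..b} \<Longrightarrow> 1 \<le> ennreal c * (\<integral>\<^sup>+ t. F s t * indicator {0..1} t \<partial>lborel)"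
  shows "ennreal ((b - a) / c\<^sup>2) \<le> (\<integral>\<^sup>+ s. \<integral>\<^sup>+ t. (F s t)\<^sup>2 \<partial>lborel \<partial>lborel)"
proof -
  have pt: "ennreal (1 / c\<^sup>2) * indicator {a..b} s \<le> (\<integral>\<^sup>+ t. (F s t)\<^sup>2 \<partial>lborel)" for s
  proof (cases "s \<in> {a..b}")
    case True
    have "ennreal (1 / c\<^sup>2) \<le> (\<integral>\<^sup>+ t. (F s t)\<^sup>2 * indicator {0..1} t \<partial>lborel)"
      by (rule cs1[OF F c h[OF True]])
    also have "\<dots> \<le> (\<integral>\<^sup>+ t. (F s t)\<^sup>2 \<partial>lborel)"
      by (intro nn_integral_mono) (auto split: split_indicator)
    finally show ?thesis using True by simp
  qed simp
  have "ennreal ((b - a) / c\<^sup>2) = (\<integral>\<^sup>+ s. ennreal (1 / c\<^sup>2) * indicator {a..b} s \<partial>lborel)"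
    using ab c by (subst nn_integral_cmult_indicator) (auto simp: ennreal_mult[symmetric])
  also have "\<dots> \<le> (\<integral>\<^sup>+ s. \<integral>\<^sup>+ t. (F s t)\<^sup>2 \<partial>lborel \<partial>lborel)"
    by (intro nn_integral_mono pt)
  finally show ?thesis .
qed

definition tcw :: "complex \<Rightarrow> complex \<Rightarrow> real" where "tcw w z = Im z / Im w"
definition xcw :: "complex \<Rightarrow> complex \<Rightarrow> real" where "xcw w z = Re z - tcw w z * Re w"
definition Sw :: "complex \<Rightarrow> complex set" where
  "Sw w = {z. 0 \<le> xcw w z \<and> xcw w z \<le> 1 \<and> 0 \<le> tcw w z \<and> tcw w z \<le> 1}"

lemma coords:
  assumes "Im w > 0"
  shows "tcw w (of_real x + of_real t * w) = t" "xcw w (of_real x + of_real t * w) = x"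
  using assms by (auto simp: tcw_def xcw_def)

lemma Sw_mem:
  assumes "Im w > 0"
  shows "of_real x + of_real t * w \<in> Sw w \<longleftrightarrow> x \<in> {0..1} \<and> t \<in> {0..1}"
  using coords[OF assms] by (auto simp: Sw_def)

lemma Sw_borel: "Sw w \<in> sets borel"
  unfolding Sw_def xcw_def tcw_def by measurable

lemma Sw_area:
  assumes w: "Im w > 0"
  shows "(\<integral>\<^sup>+ z. indicator (Sw w) z \<partial>lborel) = ennreal (Im w)"
proof -
  have [measurable]: "Sw w \<in> sets borel" by (rule Sw_borel)
  have "(\<integral>\<^sup>+ z. indicator (Sw w) z \<partial>lborel) =
      ennreal (Im w) * (\<integral>\<^sup>+ t. \<integral>\<^sup>+ x. indicator (Sw w) (of_real x + of_real t * w) \<partial>lborel \<partial>lborel)"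
    by (rule shear_integral) (use w in auto)
  also have "(\<lambda>t. \<integral>\<^sup>+ x. indicator (Sw w) (of_real x + of_real t * w) \<partial>lborel) = (\<lambda>t. indicator {0..1} t)"
  proof
    fix t
    show "(\<integral>\<^sup>+ x. indicator (Sw w) (of_real x + of_real t * w) \<partial>lborel) = indicator {0..1} t"
    proof (cases "t \<in> {0..1}")
      case True
      then have e: "(\<lambda>x. indicator (Sw w) (of_real x + of_real t * w) :: ennreal) = indicator {0..1}"
        by (auto simp: Sw_mem[OF w] fun_eq_iff split: split_indicator)
      have "integral\<^sup>N lborel (indicator {0..1::real}) = emeasure lborel {0..1::real}"
        by (rule nn_integral_indicator) simp
      then have "integral\<^sup>N lborel (indicator {0..1::real}) = (1::ennreal)" by simp
      then show ?thesis using True by (simp only: e) simp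
    next
      case False
      then have "(\<lambda>x. indicator (Sw w) (of_real x + of_real t * w) :: ennreal) = (\<lambda>_. 0)"
        by (auto simp: Sw_mem[OF w] fun_eq_iff split: split_indicator)
      then show ?thesis using False by simp
    qed
  qed
  also have "(\<integral>\<^sup>+ t. indicator {0..1::real} t \<partial>lborel) = (1::ennreal)"
  proof -
    have "integral\<^sup>N lborel (indicator {0..1::real}) = emeasure lborel {0..1::real}"
      by (rule nn_integral_indicator) simp
    then show ?thesis by simp
  qed
  finally show ?thesis by simp
qed

lemma coords_lin:
  "tcw w (u *\<^sub>R z1 + v *\<^sub>R z2) = u * tcw w z1 + v * tcw w z2"
  "xcw w (u *\<^sub>R z1 + v *\<^sub>R z2) = u * xcw w z1 + v * xcw w z2"
  by (auto simp: tcw_def xcw_def add_divide_distrib algebra_simps)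

lemma Sw_convex: "convex (Sw w)"
  unfolding convex_def
proof (intro ballI allI impI)
  fix x y and u v :: real
  assume x: "x \<in> Sw w" and y: "y \<in> Sw w" and uv: "0 \<le> u" "0 \<le> v" "u + v = 1"
  show "u *\<^sub>R x + v *\<^sub>R y \<in> Sw w"
    using x y uv
    by (auto simp: Sw_def coords_lin intro!: convex_bound_le add_nonneg_nonneg mult_nonneg_nonneg)
qed

lemma Sw_hull:
  assumes w: "Im w > 0"
  shows "convex hull {0, 1, 1 + w, w} \<subseteq> Sw w"
proof (rule hull_minimal)
  have "0 = of_real 0 + of_real 0 * w" "1 = of_real 1 + of_real 0 * w"
       "1 + w = of_real 1 + of_real 1 * w" "w = of_real 0 + of_real 1 * w" by simp_all
  then show "{0, 1, 1 + w, w} \<subseteq> Sw w" using Sw_mem[OF w] by (metis atLeastAtMost_iff empty_subsetI insert_subset order_refl zero_le_one)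
qed (rule Sw_convex)

lemma norm_ge_sin:
  assumes "sin \<theta> \<ge> 0"
  shows "sin \<theta> \<le> cmod (1 + complex_of_real r * cis \<theta>)"
proof (rule power2_le_imp_le)
  have "(cmod (1 + complex_of_real r * cis \<theta>))\<^sup>2 = (1 + r * cos \<theta>)\<^sup>2 + (r * sin \<theta>)\<^sup>2"
    by (simp add: cmod_power2)
  also have "\<dots> = (sin \<theta>)\<^sup>2 + (r + cos \<theta>)\<^sup>2"
  proof -
    have e: "(sin \<theta>)\<^sup>2 = 1 - (cos \<theta>)\<^sup>2" by (simp add: sin_squared_eq)
    show ?thesis unfolding power_mult_distrib e by (simp add: power2_eq_square algebra_simps)
  qed
  finally show "(sin \<theta>)\<^sup>2 \<le> (cmod (1 + complex_of_real r * cis \<theta>))\<^sup>2" by simp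
qed simp

lemma linepath_eq: "linepath p (p + d) t = p + of_real t * d"
  by (simp add: linepath_def scaleR_conv_of_real algebra_simps)

lemma module_Gamma:
  assumes h: "h > 0" and th: "0 < \<theta>" "\<theta> < pi / 2"
  shows "module2 {linepath (of_real x) (of_real x + of_real h * cis \<theta>) | x. 0 \<le> x \<and> x \<le> 1}
         = ennreal (sin \<theta> / h)"
proof -
  define w where "w = of_real h * cis \<theta>"
  define \<Gamma> where "\<Gamma> = {linepath (of_real x) (of_real x + w) | x. 0 \<le> x \<and> x \<le> 1}"
  have sin0: "sin \<theta> > 0" using th by (intro sin_gt_zero) auto
  have Imw: "Im w = h * sin \<theta>" and w0: "Im w > 0" using h sin0 by (auto simp: w_def)
  have nw: "norm w = h" using h by (simp add: w_def norm_mult)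
  have arc: "arclength_integral \<rho> (linepath (of_real x) (of_real x + w)) =
      ennreal h * (\<integral>\<^sup>+ t. \<rho> (of_real x + of_real t * w) * indicator {0..1} t \<partial>lborel)"
    if [measurable]: "\<rho> \<in> borel_measurable borel" for \<rho> x
    by (subst arclength_integral_linepath) (auto simp: linepath_eq nw)
  have [measurable]: "Sw w \<in> sets borel" by (rule Sw_borel)
  have upper: "module2 \<Gamma> \<le> ennreal (sin \<theta> / h)"
  proof -
    define \<rho> where "\<rho> z = ennreal (1 / h) * indicator (Sw w) z" for z
    have [measurable]: "\<rho> \<in> borel_measurable borel" unfolding \<rho>_def by measurable
    have adm: "admissible \<Gamma> \<rho>"
      unfolding admissible_def
    proof (intro conjI ballI)
      fix \<gamma> assume "\<gamma> \<in> \<Gamma>"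
      then obtain x where x: "0 \<le> x" "x \<le> 1" and g: "\<gamma> = linepath (of_real x) (of_real x + w)"
        unfolding \<Gamma>_def by auto
      have "(\<integral>\<^sup>+ t. \<rho> (of_real x + of_real t * w) * indicator {0..1} t \<partial>lborel)
          = (\<integral>\<^sup>+ t. ennreal (1 / h) * indicator {0..1::real} t \<partial>lborel)"
        by (intro nn_integral_cong) (auto simp: \<rho>_def Sw_mem[OF w0] x split: split_indicator)
      also have "\<dots> = ennreal (1 / h)" by (subst nn_integral_cmult_indicator) auto
      finally show "1 \<le> arclength_integral \<rho> \<gamma>"
        unfolding g using h by (simp add: arc ennreal_mult[symmetric])
    qed simp
    then have "module2 \<Gamma> \<le> (\<integral>\<^sup>+ z. (\<rho> z)\<^sup>2 \<partial>lborel)"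
      unfolding module2_def by (intro INF_lower) simp
    also have "(\<integral>\<^sup>+ z. (\<rho> z)\<^sup>2 \<partial>lborel) = (\<integral>\<^sup>+ z. ennreal (1 / h\<^sup>2) * indicator (Sw w) z \<partial>lborel)"
      using h by (intro nn_integral_cong) (auto simp: \<rho>_def power_mult_distrib ennreal_power power_divide split: split_indicator)
    also have "\<dots> = ennreal (1 / h\<^sup>2) * ennreal (Im w)"
      by (simp add: nn_integral_cmult Sw_area[OF w0])
    also have "\<dots> = ennreal (sin \<theta> / h)"
      using h sin0 by (simp add: ennreal_mult[symmetric] Imw power2_eq_square)
    finally show ?thesis .
  qed
  have lower: "ennreal (sin \<theta> / h) \<le> module2 \<Gamma>"
    unfolding module2_def
  proof (rule INF_greatest)
    fix \<rho> assume "\<rho> \<in> {\<rho>. admissible \<Gamma> \<rho>}"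
    then have [measurable]: "\<rho> \<in> borel_measurable borel" and adm: "\<And>\<gamma>. \<gamma> \<in> \<Gamma> \<Longrightarrow> 1 \<le> arclength_integral \<rho> \<gamma>"
      by (auto simp: admissible_def)
    have "ennreal ((1 - 0) / h\<^sup>2) \<le> (\<integral>\<^sup>+ x. \<integral>\<^sup>+ t. (\<rho> (of_real x + of_real t * w))\<^sup>2 \<partial>lborel \<partial>lborel)"
    proof (rule integrate_lower[where F="\<lambda>x t. \<rho> (of_real x + of_real t * w)"])
      fix x :: real assume "x \<in> {0..1}"
      then have inG: "linepath (of_real x) (of_real x + w) \<in> \<Gamma>" unfolding \<Gamma>_def by auto
      then show "1 \<le> ennreal h * (\<integral>\<^sup>+ t. \<rho> (of_real x + of_real t * w) * indicator {0..1} t \<partial>lborel)"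
        using adm[OF inG] arc[OF \<open>\<rho> \<in> borel_measurable borel\<close>, of x] by simp
    qed (use h in auto)
    also have "\<dots> = (\<integral>\<^sup>+ t. \<integral>\<^sup>+ x. (\<rho> (of_real x + of_real t * w))\<^sup>2 \<partial>lborel \<partial>lborel)"
      by (rule lborel_pair.Fubini'[symmetric]) measurable
    finally have "ennreal (Im w) * ennreal (1 / h\<^sup>2) \<le> ennreal (Im w) * (\<integral>\<^sup>+ t. \<integral>\<^sup>+ x. (\<rho> (of_real x + of_real t * w))\<^sup>2 \<partial>lborel \<partial>lborel)"
      by (intro mult_left_mono) auto
    also have "\<dots> = (\<integral>\<^sup>+ z. (\<rho> z)\<^sup>2 \<partial>lborel)"
      by (rule shear_integral[symmetric]) (use w0 in auto)
    finally show "ennreal (sin \<theta> / h) \<le> (\<integral>\<^sup>+ z. (\<rho> z)\<^sup>2 \<partial>lborel)"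
      using h sin0 by (simp add: ennreal_mult[symmetric] Imw power2_eq_square)
  qed
  show ?thesis using upper lower unfolding \<Gamma>_def w_def by (rule antisym)
qed

lemma module_Sigma0:
  assumes h: "h > 0" and th: "0 < \<theta>" "\<theta> < pi / 2"
  shows "module2 {linepath (of_real s * cis \<theta>) (1 + of_real s * cis \<theta>) | s. 0 \<le> s \<and> s \<le> h}
         = ennreal (h * sin \<theta>)"
proof -
  define v where "v = cis \<theta>"
  define w where "w = of_real h * v"
  define \<Sigma> where "\<Sigma> = {linepath (of_real s * v) (1 + of_real s * v) | s. 0 \<le> s \<and> s \<le> h}"
  have sin0: "sin \<theta> > 0" using th by (intro sin_gt_zero) auto
  have Imw: "Im w = h * sin \<theta>" and w0: "Im w > 0" using h sin0 by (auto simp: w_def v_def)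
  have Imv: "Im v = sin \<theta>" and v0: "Im v > 0" using sin0 by (auto simp: v_def)
  have arc: "arclength_integral \<rho> (linepath (of_real s * v) (1 + of_real s * v)) =
      (\<integral>\<^sup>+ t. \<rho> (of_real t + of_real s * v) * indicator {0..1} t \<partial>lborel)"
    if [measurable]: "\<rho> \<in> borel_measurable borel" for \<rho> s
  proof -
    have e: "linepath p (1 + p) t = of_real t + p" for p t
      by (simp add: linepath_def scaleR_conv_of_real algebra_simps)
    show ?thesis by (simp add: arclength_integral_linepath e)
  qed
  have [measurable]: "Sw w \<in> sets borel" by (rule Sw_borel)
  have pt: "of_real t + of_real s * v = of_real t + of_real (s / h) * w" for s t
    using h by (simp add: w_def)
  have upper: "module2 \<Sigma> \<le> ennreal (h * sin \<theta>)"
  proof -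
    define \<rho> where "\<rho> z = (indicator (Sw w) z :: ennreal)" for z
    have [measurable]: "\<rho> \<in> borel_measurable borel" unfolding \<rho>_def by measurable
    have adm: "admissible \<Sigma> \<rho>"
      unfolding admissible_def
    proof (intro conjI ballI)
      fix \<gamma> assume "\<gamma> \<in> \<Sigma>"
      then obtain s where s: "0 \<le> s" "s \<le> h" and g: "\<gamma> = linepath (of_real s * v) (1 + of_real s * v)"
        unfolding \<Sigma>_def by auto
      have sh: "s / h \<in> {0..1}" using s h by auto
      have memv: "of_real t + of_real s * v \<in> Sw w \<longleftrightarrow> t \<in> {0..1}" for t
        unfolding pt[of t s] by (simp only: Sw_mem[OF w0]) (use sh in auto)
      have "(\<integral>\<^sup>+ t. \<rho> (of_real t + of_real s * v) * indicator {0..1} t \<partial>lborel)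
          = (\<integral>\<^sup>+ t. indicator {0..1::real} t \<partial>lborel)"
        by (intro nn_integral_cong) (auto simp: \<rho>_def memv split: split_indicator)
      also have "\<dots> = 1"
      proof -
        have "integral\<^sup>N lborel (indicator {0..1::real}) = emeasure lborel {0..1::real}"
          by (rule nn_integral_indicator) simp
        then show ?thesis by simp
      qed
      finally show "1 \<le> arclength_integral \<rho> \<gamma>"
        unfolding g by (simp add: arc)
    qed simp
    then have "module2 \<Sigma> \<le> (\<integral>\<^sup>+ z. (\<rho> z)\<^sup>2 \<partial>lborel)"
      unfolding module2_def by (intro INF_lower) simp
    also have "(\<integral>\<^sup>+ z. (\<rho> z)\<^sup>2 \<partial>lborel) = (\<integral>\<^sup>+ z. indicator (Sw w) z \<partial>lborel)"
      by (intro nn_integral_cong) (auto simp: \<rho>_def split: split_indicator)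
    also have "\<dots> = ennreal (h * sin \<theta>)"
      by (simp add: Sw_area[OF w0] Imw)
    finally show ?thesis .
  qed
  have lower: "ennreal (h * sin \<theta>) \<le> module2 \<Sigma>"
    unfolding module2_def
  proof (rule INF_greatest)
    fix \<rho> assume "\<rho> \<in> {\<rho>. admissible \<Sigma> \<rho>}"
    then have m[measurable]: "\<rho> \<in> borel_measurable borel" and adm: "\<And>\<gamma>. \<gamma> \<in> \<Sigma> \<Longrightarrow> 1 \<le> arclength_integral \<rho> \<gamma>"
      by (auto simp: admissible_def)
    have "ennreal ((h - 0) / 1\<^sup>2) \<le> (\<integral>\<^sup>+ s. \<integral>\<^sup>+ t. (\<rho> (of_real t + of_real s * v))\<^sup>2 \<partial>lborel \<partial>lborel)"
    proof (rule integrate_lower[where F="\<lambda>s t. \<rho> (of_real t + of_real s * v)"])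
      fix s :: real assume "s \<in> {0..h}"
      then have inS: "linepath (of_real s * v) (1 + of_real s * v) \<in> \<Sigma>" unfolding \<Sigma>_def by auto
      show "1 \<le> ennreal 1 * (\<integral>\<^sup>+ t. \<rho> (of_real t + of_real s * v) * indicator {0..1} t \<partial>lborel)"
        using adm[OF inS] arc[OF m, of s] by simp
    qed (use h in auto)
    then have "ennreal (Im v) * ennreal h \<le> ennreal (Im v) * (\<integral>\<^sup>+ s. \<integral>\<^sup>+ t. (\<rho> (of_real t + of_real s * v))\<^sup>2 \<partial>lborel \<partial>lborel)"
      by (intro mult_left_mono) auto
    also have "\<dots> = (\<integral>\<^sup>+ z. (\<rho> z)\<^sup>2 \<partial>lborel)"
      by (rule shear_integral[symmetric]) (use v0 in auto)
    finally show "ennreal (h * sin \<theta>) \<le> (\<integral>\<^sup>+ z. (\<rho> z)\<^sup>2 \<partial>lborel)"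
      using h sin0 by (simp add: ennreal_mult[symmetric] Imv mult.commute)
  qed
  show ?thesis using upper lower unfolding \<Sigma>_def v_def by (rule antisym)
qed

lemma module_Sigma_upper:
  assumes h: "h > 0" and th: "0 < \<theta>" "\<theta> < pi / 2"
  shows "module2 {\<gamma>. rectifiable_curve \<gamma> \<and> path_image \<gamma> \<subseteq> convex hull {0, 1, 1 + of_real h * cis \<theta>, of_real h * cis \<theta>}
                   \<and> pathstart \<gamma> \<in> closed_segment 0 (of_real h * cis \<theta>)
                   \<and> pathfinish \<gamma> \<in> closed_segment 1 (1 + of_real h * cis \<theta>)} \<le> ennreal (h / sin \<theta>)"
    (is "module2 ?S \<le> _")
proof -
  define w where "w = of_real h * cis \<theta>"
  have sin0: "sin \<theta> > 0" using th by (intro sin_gt_zero) auto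
  have Imw: "Im w = h * sin \<theta>" and w0: "Im w > 0" using h sin0 by (auto simp: w_def)
  have [measurable]: "Sw w \<in> sets borel" by (rule Sw_borel)
  define \<rho> where "\<rho> z = ennreal (1 / sin \<theta>) * indicator (Sw w) z" for z
  have [measurable]: "\<rho> \<in> borel_measurable borel" unfolding \<rho>_def by measurable
  have adm: "admissible ?S \<rho>"
    unfolding admissible_def
  proof (intro conjI ballI)
    fix \<gamma> assume "\<gamma> \<in> ?S"
    then have rc: "rectifiable_curve \<gamma>" and pim: "path_image \<gamma> \<subseteq> convex hull {0, 1, 1 + w, w}"
      and ps: "\<gamma> 0 \<in> closed_segment 0 w" and pf: "\<gamma> 1 \<in> closed_segment 1 (1 + w)"
      by (auto simp: w_def pathstart_def pathfinish_def)
    have inS: "\<gamma> t \<in> Sw w" if "t \<in> {0..1}" for t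
    proof -
      have "\<gamma> t \<in> \<gamma> ` {0..1}" using that by blast
      then show ?thesis using pim Sw_hull[OF w0] unfolding path_image_def by blast
    qed
    have "ennreal (1 / sin \<theta>) * ennreal (norm (\<gamma> 1 - \<gamma> 0)) \<le> arclength_integral \<rho> \<gamma>"
      by (rule arclength_integral_ge[OF rc]) (auto simp: \<rho>_def inS)
    moreover have "sin \<theta> \<le> norm (\<gamma> 1 - \<gamma> 0)"
    proof -
      obtain u where u: "\<gamma> 0 = (1 - u) *\<^sub>R 0 + u *\<^sub>R w" using ps unfolding in_segment by auto
      obtain v where v: "\<gamma> 1 = (1 - v) *\<^sub>R 1 + v *\<^sub>R (1 + w)" using pf unfolding in_segment by auto
      have "\<gamma> 1 - \<gamma> 0 = 1 + complex_of_real ((v - u) * h) * cis \<theta>"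
        unfolding u v w_def by (simp add: scaleR_conv_of_real algebra_simps)
      then show ?thesis using norm_ge_sin[of \<theta> "(v - u) * h"] sin0 by simp
    qed
    ultimately have "ennreal (1 / sin \<theta>) * ennreal (sin \<theta>) \<le> arclength_integral \<rho> \<gamma>"
      by (meson ennreal_leI mult_left_mono order_trans zero_le)
    then show "1 \<le> arclength_integral \<rho> \<gamma>"
      using sin0 by (simp add: ennreal_mult[symmetric])
  qed simp
  then have "module2 ?S \<le> (\<integral>\<^sup>+ z. (\<rho> z)\<^sup>2 \<partial>lborel)"
    unfolding module2_def by (intro INF_lower) simp
  also have "(\<integral>\<^sup>+ z. (\<rho> z)\<^sup>2 \<partial>lborel) = (\<integral>\<^sup>+ z. ennreal (1 / (sin \<theta>)\<^sup>2) * indicator (Sw w) z \<partial>lborel)"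
    using sin0 by (intro nn_integral_cong) (auto simp: \<rho>_def power_mult_distrib ennreal_power power_divide split: split_indicator)
  also have "\<dots> = ennreal (1 / (sin \<theta>)\<^sup>2) * ennreal (Im w)"
    by (simp add: nn_integral_cmult Sw_area[OF w0])
  also have "\<dots> = ennreal (h / sin \<theta>)"
    using h sin0 by (simp add: ennreal_mult[symmetric] Imw power2_eq_square)
  finally show ?thesis .
qed

lemma Sigma0_subset:
  assumes h: "h > 0" and th: "0 < \<theta>" "\<theta> < pi / 2"
  shows "{linepath (of_real s * cis \<theta>) (1 + of_real s * cis \<theta>) | s. 0 \<le> s \<and> s \<le> h}
    \<subseteq> {\<gamma>. rectifiable_curve \<gamma> \<and> path_image \<gamma> \<subseteq> convex hull {0, 1, 1 + of_real h * cis \<theta>, of_real h * cis \<theta>}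
                   \<and> pathstart \<gamma> \<in> closed_segment 0 (of_real h * cis \<theta>)
                   \<and> pathfinish \<gamma> \<in> closed_segment 1 (1 + of_real h * cis \<theta>)}"
proof -
  define w where "w = of_real h * cis \<theta>"
  define H where "H = convex hull {0, 1, 1 + w, w}"
  have cH: "convex H" unfolding H_def by simp
  have segH1: "closed_segment 0 w \<subseteq> H" unfolding H_def
    by (rule closed_segment_subset) (auto intro: hull_inc)
  have segH2: "closed_segment 1 (1 + w) \<subseteq> H" unfolding H_def
    by (rule closed_segment_subset) (auto intro: hull_inc)
  {
    fix s assume s: "0 \<le> s" "s \<le> h"
    define p where "p = of_real s * cis \<theta>"
    have p1: "p \<in> closed_segment 0 w"
      unfolding in_segment using s h
      by (intro exI[of _ "s / h"]) (auto simp: p_def w_def scaleR_conv_of_real)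
    have p2: "1 + p \<in> closed_segment 1 (1 + w)"
      unfolding in_segment using s h
      by (intro exI[of _ "s / h"]) (auto simp: p_def w_def scaleR_conv_of_real algebra_simps)
    have "rectifiable_curve (linepath p (1 + p))"
      unfolding rectifiable_curve_def by (simp add: curve_length_linepath)
    moreover have "path_image (linepath p (1 + p)) \<subseteq> H"
    proof -
      have "p \<in> H" "1 + p \<in> H" using p1 p2 segH1 segH2 by auto
      then show ?thesis using cH by (simp add: closed_segment_subset)
    qed
    ultimately have "linepath p (1 + p) \<in> {\<gamma>. rectifiable_curve \<gamma> \<and> path_image \<gamma> \<subseteq> H
                   \<and> pathstart \<gamma> \<in> closed_segment 0 w \<and> pathfinish \<gamma> \<in> closed_segment 1 (1 + w)}"
      using p1 p2 by simp
  }
  then show ?thesis unfolding H_def w_def by blast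
qed

theorem proposition2p5:
  fixes h \<theta> :: real
  assumes "h > 0" and "0 < \<theta>" and "\<theta> < pi / 2"
  defines "\<Gamma>\<theta> \<equiv> {linepath (of_real x) (of_real x + of_real h * cis \<theta>) | x. 0 \<le> x \<and> x \<le> 1}"
      and "\<Sigma>0 \<equiv> {linepath (of_real s * cis \<theta>) (1 + of_real s * cis \<theta>) | s. 0 \<le> s \<and> s \<le> h}"
      and "\<Sigma> \<equiv> {\<gamma>. rectifiable_curve \<gamma> \<and> path_image \<gamma> \<subseteq> convex hull {0, 1, 1 + of_real h * cis \<theta>, of_real h * cis \<theta>}
                   \<and> pathstart \<gamma> \<in> closed_segment 0 (of_real h * cis \<theta>)
                   \<and> pathfinish \<gamma> \<in> closed_segment 1 (1 + of_real h * cis \<theta>)}"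
  shows "module2 \<Gamma>\<theta> = ennreal (sin \<theta> / h)
     \<and> module2 \<Gamma>\<theta> * module2 \<Sigma>0 = ennreal ((sin \<theta>)\<^sup>2)
     \<and> module2 \<Sigma> \<le> module2 \<Sigma>0 + ennreal (h * (cos \<theta>)\<^sup>2 / sin \<theta>)
     \<and> module2 \<Sigma>0 \<le> module2 \<Sigma> + ennreal (h * (cos \<theta>)\<^sup>2 / sin \<theta>)"
proof -
  have sin0: "sin \<theta> > 0" using assms(2,3) by (intro sin_gt_zero) auto
  have G: "module2 \<Gamma>\<theta> = ennreal (sin \<theta> / h)"
    unfolding \<Gamma>\<theta>_def by (rule module_Gamma[OF assms(1-3)])
  have S0: "module2 \<Sigma>0 = ennreal (h * sin \<theta>)"
    unfolding \<Sigma>0_def by (rule module_Sigma0[OF assms(1-3)])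
  have SU: "module2 \<Sigma> \<le> ennreal (h / sin \<theta>)"
    unfolding \<Sigma>_def by (rule module_Sigma_upper[OF assms(1-3)])
  have sub: "module2 \<Sigma>0 \<le> module2 \<Sigma>"
    unfolding module2_def
  proof (rule INF_superset_mono)
    show "{\<rho>. admissible \<Sigma> \<rho>} \<subseteq> {\<rho>. admissible \<Sigma>0 \<rho>}"
      using Sigma0_subset[OF assms(1-3)] unfolding \<Sigma>0_def \<Sigma>_def admissible_def by blast
  qed simp
  have c2: "ennreal (sin \<theta> / h) * ennreal (h * sin \<theta>) = ennreal ((sin \<theta>)\<^sup>2)"
    using assms(1) sin0 by (simp add: ennreal_mult[symmetric] power2_eq_square)
  have c3: "ennreal (h * sin \<theta>) + ennreal (h * (cos \<theta>)\<^sup>2 / sin \<theta>) = ennreal (h / sin \<theta>)"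
  proof -
    have e: "cos \<theta> * cos \<theta> + sin \<theta> * sin \<theta> = 1" by (rule sin_cos_squared_add3)
    have "h * sin \<theta> + h * (cos \<theta>)\<^sup>2 / sin \<theta> = h / sin \<theta>"
      using sin0 e by (simp add: field_simps power2_eq_square) (simp add: distrib_left[symmetric])
    then show ?thesis using assms(1) sin0
      by (simp add: ennreal_plus[symmetric] del: ennreal_plus)
  qed
  show ?thesis
    using G S0 SU sub c2 c3
    by (auto intro: order_trans add_increasing2)
qed

end
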